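(* Let $k\ge n\ge 2$, and let $\pi$ assign to each $n$-element subset $S\subseteq[k]$ a string $\pi(S)$ of length $n$ that is an ordering of the elements of $S$. Let $R\subseteq[k]$ with $|R|=n-1$, and suppose that $d(\pi(S),\pi(S'))\le 2$ for all $S,S'\in\mathcal U_R$. Then there exists a subset $A_R\subseteq R$ of size $n-2$ such that $R$ freezes $A_R$.
   Context: $[k]=\{1,\dots,k\}$; $d$ is Hamming distance; $\pi(S)[i]$ is the letter at position $i\in[n]$ of $\pi(S)$. For a set $R\subseteq[k]$, $\mathcal U_R$ is the set of all sets $S\subseteq[k]$ with $R\subset S$ and $|S|=|R|+1$. For $|R|=n-1$ and $A_R\subseteq R$, we say $R$ freezes $A_R$ (with freezing function $g_R$) if there is a one-to-one map $g_R:A_R\to[n]$ such that $\pi(S)[g_R(a)]=a$ for all $a\in A_R$ and all $S\in\mathcal U_R$. *)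

theory Defs
  imports Main
begin

text \<open>Strings are lists of naturals; positions [n] = {1..n} are accessed via
  list index i-1 (i.e. nth xs (i - 1)).\<close>

definition letter_at :: "nat list \<Rightarrow> nat \<Rightarrow> nat" where
  "letter_at xs i = xs ! (i - 1)"

definition hamming :: "nat list \<Rightarrow> nat list \<Rightarrow> nat" where
  "hamming xs ys = card {i \<in> {1..length xs}. letter_at xs i \<noteq> letter_at ys i}"

definition U :: "nat \<Rightarrow> nat set \<Rightarrow> nat set set" where
  "U k R = {S. S \<subseteq> {1..k} \<and> R \<subset> S \<and> card S = card R + 1}"

definition freezes :: "nat \<Rightarrow> nat \<Rightarrow> (nat set \<Rightarrow> nat list) \<Rightarrow> nat set \<Rightarrow> nat set \<Rightarrow> bool" where
  "freezes k n \<pi> R A \<longleftrightarrow> A \<subseteq> R \<and>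
     (\<exists>g. inj_on g A \<and> g ` A \<subseteq> {1..n} \<and>
          (\<forall>a\<in>A. \<forall>S\<in>U k R. letter_at (\<pi> S) (g a) = a))"

end

theory Submission
  imports Defs
begin

lemma la_inj:
  assumes "distinct xs" "i \<in> {1..length xs}" "j \<in> {1..length xs}"
    "letter_at xs i = letter_at xs j"
  shows "i = j"
proof -
  have "i - 1 = j - 1" using assms nth_eq_iff_index_eq[of xs "i-1" "j-1"]
    by (auto simp: letter_at_def)
  thus ?thesis using assms(2,3) by auto
qed

lemma la_in: "i \<in> {1..length xs} \<Longrightarrow> letter_at xs i \<in> set xs"
  by (auto simp: letter_at_def)

lemma la_ex: "a \<in> set xs \<Longrightarrow> \<exists>i\<in>{1..length xs}. letter_at xs i = a"
proof -
  assume "a \<in> set xs"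
  then obtain j where "j < length xs" "xs ! j = a" by (auto simp: in_set_conv_nth)
  thus ?thesis by (intro bexI[of _ "Suc j"]) (auto simp: letter_at_def)
qed

theorem lemma3p6:
  fixes k n :: nat and \<pi> :: "nat set \<Rightarrow> nat list" and R :: "nat set"
  assumes "2 \<le> n" and "n \<le> k"
    and "\<forall>S. S \<subseteq> {1..k} \<and> card S = n \<longrightarrow>
           length (\<pi> S) = n \<and> distinct (\<pi> S) \<and> set (\<pi> S) = S"
    and "R \<subseteq> {1..k}" and "card R = n - 1"
    and "\<forall>S\<in>U k R. \<forall>S'\<in>U k R. hamming (\<pi> S) (\<pi> S') \<le> 2"
  shows "\<exists>A. A \<subseteq> R \<and> card A = n - 2 \<and> freezes k n \<pi> R A"
proof -
  note pi = assms(3)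
  have finR: "finite R" using assms(4) finite_subset by blast
  obtain x where x: "x \<in> {1..k}" "x \<notin> R"
  proof -
    have "\<not> {1..k} \<subseteq> R"
    proof
      assume "{1..k} \<subseteq> R"
      then have "card {1..k} \<le> card R" using finR card_mono by blast
      thus False using assms by simp
    qed
    thus ?thesis using that by blast
  qed
  define S1 where "S1 = insert x R"
  have S1U: "S1 \<in> U k R" using x assms(4) finR by (auto simp: U_def S1_def)
  have Ulem: "\<exists>y. y \<in> {1..k} \<and> y \<notin> R \<and> S = insert y R" if "S \<in> U k R" for S
  proof -
    have S: "S \<subseteq> {1..k}" "R \<subset> S" "card S = card R + 1" using that by (auto simp: U_def)
    then obtain y where y: "y \<in> S" "y \<notin> R" by blast
    have fS: "finite S" using S(1) finite_subset by blast
    have "insert y R = S"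
      using card_subset_eq[OF fS, of "insert y R"] y S finR by auto
    thus ?thesis using y S(1) by blast
  qed
  have Pi: "length (\<pi> S) = n \<and> distinct (\<pi> S) \<and> set (\<pi> S) = S" if "S \<in> U k R" for S
  proof -
    have "S \<subseteq> {1..k}" "card S = n" using that assms(1,5) by (auto simp: U_def)
    thus ?thesis using pi by blast
  qed
  have P1: "length (\<pi> S1) = n" "distinct (\<pi> S1)" "set (\<pi> S1) = S1" using Pi[OF S1U] by auto
  obtain p1 where p1: "p1 \<in> {1..n}" "letter_at (\<pi> S1) p1 = x"
    using la_ex[of x "\<pi> S1"] P1 by (auto simp: S1_def)
  define D where "D S = {i \<in> {1..n}. letter_at (\<pi> S) i \<noteq> letter_at (\<pi> S1) i}" for S
  have cardD: "card (D S) \<le> 2" if "S \<in> U k R" for S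
    using assms(6) that S1U Pi[OF that] by (auto simp: hamming_def D_def)
  have finD: "finite (D S)" for S by (simp add: D_def)
  have DS1: "D S1 = {}" by (simp add: D_def)
  have p1D: "p1 \<in> D S" if "S \<in> U k R" "S \<noteq> S1" for S
  proof -
    note hS = that
    obtain y where y: "y \<notin> R" "S = insert y R" using Ulem[of S] hS(1) by blast
    have "y \<noteq> x" using y that(2) by (auto simp: S1_def)
    have "letter_at (\<pi> S) p1 \<in> S" using la_in[of p1 "\<pi> S"] Pi[OF that(1)] p1 by auto
    thus ?thesis using y \<open>y \<noteq> x\<close> x p1 by (auto simp: D_def)
  qed
  have Dsub: "D S \<subseteq> {p1, q}" if "S \<in> U k R" "q \<in> D S" "q \<noteq> p1" for S q
  proof -
    have "S \<noteq> S1" using that DS1 by auto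
    then have sub: "{p1, q} \<subseteq> D S" using p1D that by auto
    have "card {p1, q} = 2" using that by auto
    then have "{p1, q} = D S" using card_seteq[OF finD sub] cardD[OF that(1)] by auto
    thus ?thesis by auto
  qed
  have key: "letter_at (\<pi> S) p1 = letter_at (\<pi> S1) q"
    if "S \<in> U k R" "q \<in> D S" "q \<noteq> p1" for S q
  proof -
    define r where "r = letter_at (\<pi> S1) q"
    have q: "q \<in> {1..n}" using that by (auto simp: D_def)
    have "r \<in> S1" using la_in[of q "\<pi> S1"] P1 q by (auto simp: r_def)
    moreover have "r \<noteq> x" using la_inj[of "\<pi> S1" q p1] P1 q p1 that(3) by (auto simp: r_def)
    ultimately have "r \<in> R" by (auto simp: S1_def)
    note hS = that
    obtain y where y: "S = insert y R" using Ulem[of S] hS(1) by blast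
    have "r \<in> set (\<pi> S)" using Pi[OF that(1)] \<open>r \<in> R\<close> y by auto
    then obtain j where j: "j \<in> {1..n}" "letter_at (\<pi> S) j = r"
      using la_ex[of r "\<pi> S"] Pi[OF hS(1)] by auto
    have "j \<in> D S"
    proof (rule ccontr)
      assume "j \<notin> D S"
      then have "letter_at (\<pi> S1) j = letter_at (\<pi> S1) q" using j by (auto simp: D_def r_def)
      then have "j = q" using la_inj[of "\<pi> S1" j q] P1 j q by auto
      thus False using \<open>j \<notin> D S\<close> that(2) by simp
    qed
    moreover have "j \<noteq> q" using j that(2) by (auto simp: D_def r_def)
    ultimately have "j = p1" using Dsub[OF that] by auto
    thus ?thesis using j r_def by simp
  qed
  have main: False if "S2 \<in> U k R" "q2 \<in> D S2" "q2 \<noteq> p1"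
    "S3 \<in> U k R" "q3 \<in> D S3" "q3 \<noteq> p1" "q3 \<noteq> q2" for S2 S3 q2 q3
  proof -
    have "q3 \<notin> D S2" using Dsub[OF that(1-3)] that by auto
    have "q2 \<notin> D S3" using Dsub[OF that(4-6)] that by auto
    have q2: "q2 \<in> {1..n}" and q3: "q3 \<in> {1..n}" using that by (auto simp: D_def)
    have a: "letter_at (\<pi> S2) q2 \<noteq> letter_at (\<pi> S3) q2"
      using that(2) \<open>q2 \<notin> D S3\<close> q2 by (auto simp: D_def)
    have b: "letter_at (\<pi> S2) q3 \<noteq> letter_at (\<pi> S3) q3"
      using that(5) \<open>q3 \<notin> D S2\<close> q3 by (auto simp: D_def)
    have c: "letter_at (\<pi> S2) p1 \<noteq> letter_at (\<pi> S3) p1"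
      using key[OF that(1-3)] key[OF that(4-6)] la_inj[of "\<pi> S1" q2 q3] P1 q2 q3 that(7)
      by auto
    have sub: "{p1, q2, q3} \<subseteq> {i \<in> {1..length (\<pi> S2)}. letter_at (\<pi> S2) i \<noteq> letter_at (\<pi> S3) i}"
      using a b c p1 q2 q3 Pi[OF that(1)] by auto
    have "card {p1, q2, q3} = 3" using that by auto
    then have "3 \<le> hamming (\<pi> S2) (\<pi> S3)"
      unfolding hamming_def using card_mono[OF _ sub] by auto
    thus False using assms(6) that(1,4) by fastforce
  qed
  define E where "E = insert p1 (\<Union>S\<in>U k R. D S)"
  obtain q where Eq: "E \<subseteq> {p1, q}"
  proof (cases "\<exists>S2\<in>U k R. \<exists>q2\<in>D S2. q2 \<noteq> p1")
    case True
    then obtain S2 q2 where h: "S2 \<in> U k R" "q2 \<in> D S2" "q2 \<noteq> p1" by blast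
    have "E \<subseteq> {p1, q2}" using main[OF h] by (auto simp: E_def)
    thus ?thesis using that by blast
  next
    case False
    then have "E \<subseteq> {p1, p1}" by (auto simp: E_def)
    thus ?thesis using that by blast
  qed
  have c2: "card {p1, q} \<le> 2" by (simp add: card_insert_if)
  have "card E \<le> 2" using card_mono[OF _ Eq] c2 by (meson finite.emptyI finite.insertI order.trans)
  have "E \<subseteq> {1..n}" using p1 by (auto simp: E_def D_def)
  define F where "F = {1..n} - E"
  have "finite E" using Eq finite_subset by blast
  have "card F \<ge> n - 2" unfolding F_def
    using card_Diff_subset[OF \<open>finite E\<close> \<open>E \<subseteq> {1..n}\<close>] \<open>card E \<le> 2\<close> by simp
  then obtain P where P: "P \<subseteq> F" "card P = n - 2"
    using obtain_subset_with_card_n by metis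
  define f where "f i = letter_at (\<pi> S1) i" for i
  have injf: "inj_on f P"
  proof (rule inj_onI)
    fix i j assume "i \<in> P" "j \<in> P" "f i = f j"
    then show "i = j" using P la_inj[of "\<pi> S1" i j] P1 unfolding f_def F_def by blast
  qed
  define A where "A = f ` P"
  define g where "g = inv_into P f"
  have AR: "A \<subseteq> R"
  proof
    fix a assume "a \<in> A"
    then obtain i where i: "i \<in> P" "a = f i" by (auto simp: A_def)
    have "i \<in> {1..n}" "i \<noteq> p1" using i P by (auto simp: F_def E_def)
    then have "a \<in> S1" "a \<noteq> x"
      using la_in[of i "\<pi> S1"] la_inj[of "\<pi> S1" i p1] P1 p1 i by (auto simp: f_def)
    thus "a \<in> R" by (auto simp: S1_def)
  qed
  have cA: "card A = n - 2" using card_image[OF injf] P by (simp add: A_def)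
  have "freezes k n \<pi> R A"
    unfolding freezes_def
  proof (intro conjI exI[of _ g])
    show "A \<subseteq> R" by (rule AR)
    show "inj_on g A" unfolding g_def A_def by (rule inj_on_inv_into) simp
    show "g ` A \<subseteq> {1..n}" using P injf by (auto simp: g_def A_def F_def)
    show "\<forall>a\<in>A. \<forall>S\<in>U k R. letter_at (\<pi> S) (g a) = a"
    proof (intro ballI)
      fix a S assume a: "a \<in> A" and S: "S \<in> U k R"
      then obtain i where i: "i \<in> P" "a = f i" by (auto simp: A_def)
      have gi: "g a = i" using i injf by (simp add: g_def)
      have "i \<notin> D S" "i \<in> {1..n}" using i P S by (auto simp: F_def E_def)
      thus "letter_at (\<pi> S) (g a) = a" using gi i by (auto simp: D_def f_def)
    qed
  qed
  thus ?thesis using AR cA by blast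
qed

end
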